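(* Let $V$ be a homogeneous degree-$d$ divergence-free vector field on $\mathbf{C}^3$ not vanishing on $\mathbf{C}^3\setminus\{0\}$, with induced foliation $\mathcal{F}$ of $\mathbf{P}^2_{\mathbf{C}}$ and real field $W$. Let $p\in\mathbf{C}^3\setminus\{0\}$ with $p\cdot V(p)=0$, so that $b=\Pi(p)$ is a zero of $W$ on the regular part of $\mathcal{F}$. Then, for the restriction of $W$ to the leaf of $\mathcal{F}$ through $b$, the zero $b$: (1) is a sink if and only if $\|V(p)\|^2>|DV(V)(p)\cdot p|$; (2) is a saddle if and only if $\|V(p)\|^2<|DV(V)(p)\cdot p|$; (3) is never a source.
   Context: $\Pi:\mathbf{C}^3\setminus\{0\}\to\mathbf{P}^2_{\mathbf{C}}$ is the quotient map, $p\cdot p'=x\bar x'+y\bar y'+z\bar z'$ the standard Hermitian product, $\|\cdot\|$ its norm. Writing $V=\sum_{k\in\{x,y,z\}}V_k\,\partial_k$, $DV(V)$ is the vector field with components $DV(V)_k=\sum_{l\in\{x,y,z\}}V_l\,\partial V_k/\partial l$. The real field $W$ is the projection to $\mathbf{P}^2_{\mathbf{C}}$ of the real vector field $\mathrm{Re}(\tilde\rho V)$ with $\tilde\rho(p)=-2(p\cdot V(p))/\|p\|^{2d}$ (the leafwise gradient of $-\log\|p\|^2$ for the leafwise metric $\tilde g_p(V(p))=\|p\|^{2d-2}$). A zero is a sink (resp. source) if all eigenvalues of the linearization have negative (resp. positive) real part, and a saddle if the real parts are nonzero with some of opposite signs. *)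

theory Defs
  imports "HOL-Analysis.Analysis"
begin

text \<open>Points of C^3 are elements of type complex^3, with coordinates
  q$1 = x, q$2 = y, q$3 = z.  A (complex) vector field on C^3 is a map
  complex^3 \<Rightarrow> complex^3.\<close>

definition homogeneous_poly_field :: "nat \<Rightarrow> (complex^3 \<Rightarrow> complex^3) \<Rightarrow> bool" where
  "homogeneous_poly_field d V \<longleftrightarrow>
     (\<exists>c :: 3 \<Rightarrow> nat \<Rightarrow> nat \<Rightarrow> complex. \<forall>k q.
        V q $ k = (\<Sum>(i,j)\<in>{(i,j). i + j \<le> d}.
                      c k i j * (q$1)^i * (q$2)^j * (q$3)^(d - i - j)))"

definition pderiv_field :: "(complex^3 \<Rightarrow> complex^3) \<Rightarrow> 3 \<Rightarrow> 3 \<Rightarrow> complex^3 \<Rightarrow> complex" where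
  "pderiv_field V k l q = deriv (\<lambda>t. V (q + t *s axis l 1) $ k) 0"

definition divergence :: "(complex^3 \<Rightarrow> complex^3) \<Rightarrow> complex^3 \<Rightarrow> complex" where
  "divergence V q = (\<Sum>k\<in>UNIV. pderiv_field V k k q)"

definition DVV :: "(complex^3 \<Rightarrow> complex^3) \<Rightarrow> complex^3 \<Rightarrow> complex^3" where
  "DVV V q = (\<chi> k. \<Sum>l\<in>UNIV. V q $ l * pderiv_field V k l q)"

definition herm :: "complex^3 \<Rightarrow> complex^3 \<Rightarrow> complex" where
  "herm p p' = (\<Sum>k\<in>UNIV. p$k * cnj (p'$k))"

definition rho_tilde :: "nat \<Rightarrow> (complex^3 \<Rightarrow> complex^3) \<Rightarrow> complex^3 \<Rightarrow> complex" where
  "rho_tilde d V q = -2 * herm q (V q) / complex_of_real (norm q ^ (2*d))"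

text \<open>The real vector field Re(rho~ V) on C^3 - {0} (C^3 viewed as R^6);
  its projection by Pi is W.\<close>
definition W_lift :: "nat \<Rightarrow> (complex^3 \<Rightarrow> complex^3) \<Rightarrow> complex^3 \<Rightarrow> complex^3" where
  "W_lift d V q = rho_tilde d V q *s V q"

text \<open>Linearization at b = Pi(p) of the restriction of W to the leaf through b,
  written in the complex coordinate s of the tangent line
  T_b L = { s * dPi_p(V(p)) : s \<in> C }.  Since W is Pi-related to W_lift and
  W_lift(p) = 0, DW(b)(dPi_p h) = dPi_p(D W_lift(p) h); for h = s V(p) the vector
  D W_lift(p) h lies in C V(p), and its coefficient with respect to V(p)
  (p and V(p) being Hermitian-orthogonal) is extracted below.  This is an
  R-linear map C \<rightarrow> C, i.e. a real linear endomorphism of the 2-dimensional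
  real tangent plane of the leaf.\<close>
definition leaf_linearization :: "nat \<Rightarrow> (complex^3 \<Rightarrow> complex^3) \<Rightarrow> complex^3 \<Rightarrow> complex \<Rightarrow> complex" where
  "leaf_linearization d V p s =
     herm (frechet_derivative (W_lift d V) (at p) (s *s V p)) (V p)
       / complex_of_real ((norm (V p))^2)"

text \<open>Eigenvalues of an R-linear map L : C \<rightarrow> C (= R^2), i.e. the complex roots of
  the characteristic polynomial of its real 2x2 matrix with columns L(1), L(i).\<close>
definition real_lin_eigenvalues :: "(complex \<Rightarrow> complex) \<Rightarrow> complex set" where
  "real_lin_eigenvalues L =
     (let a11 = Re (L 1); a21 = Im (L 1); a12 = Re (L \<i>); a22 = Im (L \<i>)
      in {ev. ev^2 - complex_of_real (a11 + a22) * ev + complex_of_real (a11*a22 - a12*a21) = 0})"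

definition is_sink :: "(complex \<Rightarrow> complex) \<Rightarrow> bool" where
  "is_sink L \<longleftrightarrow> (\<forall>ev\<in>real_lin_eigenvalues L. Re ev < 0)"

definition is_source :: "(complex \<Rightarrow> complex) \<Rightarrow> bool" where
  "is_source L \<longleftrightarrow> (\<forall>ev\<in>real_lin_eigenvalues L. Re ev > 0)"

definition is_saddle :: "(complex \<Rightarrow> complex) \<Rightarrow> bool" where
  "is_saddle L \<longleftrightarrow> (\<forall>ev\<in>real_lin_eigenvalues L. Re ev \<noteq> 0)
     \<and> (\<exists>ev\<in>real_lin_eigenvalues L. Re ev < 0) \<and> (\<exists>ev\<in>real_lin_eigenvalues L. Re ev > 0)"

end

theory Submission
  imports Defs
begin

lemma has_derivative_vecI:
  fixes f :: "'a::real_normed_vector \<Rightarrow> complex^'n"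
  assumes "\<And>i. ((\<lambda>x. f x $ i) has_derivative (\<lambda>h. D h $ i)) (at x)"
  shows "(f has_derivative D) (at x)"
proof -
  have "((\<lambda>x. f x \<bullet> b) has_derivative (\<lambda>h. D h \<bullet> b)) (at x)" if "b \<in> Basis" for b
  proof -
    from that obtain k c where b: "b = axis k c" "c \<in> Basis" unfolding Basis_vec_def by auto
    have "((\<lambda>x. (f x $ k) \<bullet> c) has_derivative (\<lambda>h. (D h $ k) \<bullet> c)) (at x)"
      by (rule bounded_linear.has_derivative[OF bounded_linear_inner_left assms])
    then show ?thesis using b by (simp add: inner_axis)
  qed
  then show ?thesis using has_derivative_componentwise_within[of f D x UNIV] by simp
qed
definition cpd :: "(complex^3 \<Rightarrow> complex) \<Rightarrow> bool" where
  "cpd f \<longleftrightarrow> (\<forall>q. \<exists>a. (f has_derivative (\<lambda>h. \<Sum>l\<in>UNIV. a l * h$l)) (at q))"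

lemma cpd_const: "cpd (\<lambda>q. c)"
  unfolding cpd_def
proof
  fix q show "\<exists>a. ((\<lambda>q. c) has_derivative (\<lambda>h. \<Sum>l\<in>UNIV. a l * h$l)) (at q)"
    by (rule exI[of _ "\<lambda>l. 0"]) simp
qed

lemma cpd_coord: "cpd (\<lambda>q. q$m)"
  unfolding cpd_def
proof
  fix q :: "complex^3"
  have e: "(\<lambda>h::complex^3. \<Sum>l\<in>UNIV. (if l = m then 1 else 0) * h$l) = (\<lambda>h. h$m)"
  proof
    fix h :: "complex^3"
    have "(\<Sum>l\<in>UNIV. (if l = m then 1 else 0) * h$l) = (\<Sum>l\<in>UNIV. if l = m then h$l else 0)"
      by (rule sum.cong) auto
    then show "(\<Sum>l\<in>UNIV. (if l = m then 1 else 0) * h$l) = h$m" by simp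
  qed
  have "((\<lambda>q::complex^3. q$m) has_derivative (\<lambda>h. h$m)) (at q)"
    by (rule bounded_linear.has_derivative[OF bounded_linear_vec_nth has_derivative_ident])
  then show "\<exists>a. ((\<lambda>q. q$m) has_derivative (\<lambda>h. \<Sum>l\<in>UNIV. a l * h$l)) (at q)"
    by (intro exI[of _ "\<lambda>l. if l = m then 1 else 0"]) (simp only: e)
qed

lemma cpd_add: "cpd f \<Longrightarrow> cpd g \<Longrightarrow> cpd (\<lambda>q. f q + g q)"
  unfolding cpd_def
proof
  fix q assume f: "\<forall>q. \<exists>a. (f has_derivative (\<lambda>h. \<Sum>l\<in>UNIV. a l * h$l)) (at q)"
    and g: "\<forall>q. \<exists>a. (g has_derivative (\<lambda>h. \<Sum>l\<in>UNIV. a l * h$l)) (at q)"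
  obtain a where a: "(f has_derivative (\<lambda>h. \<Sum>l\<in>UNIV. a l * h$l)) (at q)" using f by blast
  obtain b where b: "(g has_derivative (\<lambda>h. \<Sum>l\<in>UNIV. b l * h$l)) (at q)" using g by blast
  show "\<exists>c. ((\<lambda>q. f q + g q) has_derivative (\<lambda>h. \<Sum>l\<in>UNIV. c l * h$l)) (at q)"
    using has_derivative_add[OF a b]
    by (intro exI[of _ "\<lambda>l. a l + b l"]) (simp add: distrib_right sum.distrib)
qed

lemma cpd_mult: "cpd f \<Longrightarrow> cpd g \<Longrightarrow> cpd (\<lambda>q. f q * g q)"
  unfolding cpd_def
proof
  fix q assume f: "\<forall>q. \<exists>a. (f has_derivative (\<lambda>h. \<Sum>l\<in>UNIV. a l * h$l)) (at q)"
    and g: "\<forall>q. \<exists>a. (g has_derivative (\<lambda>h. \<Sum>l\<in>UNIV. a l * h$l)) (at q)"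
  obtain a where a: "(f has_derivative (\<lambda>h. \<Sum>l\<in>UNIV. a l * h$l)) (at q)" using f by blast
  obtain b where b: "(g has_derivative (\<lambda>h. \<Sum>l\<in>UNIV. b l * h$l)) (at q)" using g by blast
  have e: "(\<lambda>h. f q * (\<Sum>l\<in>UNIV. b l * h$l) + (\<Sum>l\<in>UNIV. a l * h$l) * g q)
     = (\<lambda>h. \<Sum>l\<in>UNIV. (f q * b l + a l * g q) * h$l)"
    by (simp add: sum_distrib_left sum_distrib_right sum.distrib[symmetric] algebra_simps)
  show "\<exists>c. ((\<lambda>q. f q * g q) has_derivative (\<lambda>h. \<Sum>l\<in>UNIV. c l * h$l)) (at q)"
    using has_derivative_mult[OF a b] unfolding e by (intro exI[of _ "\<lambda>l. f q * b l + a l * g q"])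
qed

lemma cpd_power: "cpd f \<Longrightarrow> cpd (\<lambda>q. f q ^ n)"
  by (induction n) (simp_all add: cpd_const cpd_mult)

lemma cpd_sum: "finite S \<Longrightarrow> (\<And>s. s \<in> S \<Longrightarrow> cpd (f s)) \<Longrightarrow> cpd (\<lambda>q. \<Sum>s\<in>S. f s q)"
  by (induction S rule: finite_induct) (simp_all add: cpd_const cpd_add)

lemma fin_ij: "finite {(i,j). i + j \<le> (d::nat)}"
  by (rule finite_subset[of _ "{..d} \<times> {..d}"]) auto

lemma cpd_V: assumes "homogeneous_poly_field d V" shows "cpd (\<lambda>q. V q $ k)"
proof -
  obtain c where c: "\<forall>k q. V q $ k = (\<Sum>(i,j)\<in>{(i,j). i + j \<le> d}.
                      c k i j * (q$1)^i * (q$2)^j * (q$3)^(d - i - j))"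
    using assms unfolding homogeneous_poly_field_def by blast
  have "cpd (\<lambda>q. \<Sum>(i,j)\<in>{(i,j). i + j \<le> d}. c k i j * (q$1)^i * (q$2)^j * (q$3)^(d - i - j))"
    apply (rule cpd_sum[OF fin_ij])
    subgoal for s by (cases s) (simp add: cpd_mult cpd_const cpd_power cpd_coord)
    done
  then show ?thesis using c by simp
qed
lemma eig:
  fixes A c :: real and B :: complex and L :: "complex \<Rightarrow> complex"
  assumes L: "\<And>s. L s = complex_of_real c * (complex_of_real A * s + B * cnj s)"
  shows "real_lin_eigenvalues L = {complex_of_real (c*(A + cmod B)), complex_of_real (c*(A - cmod B))}"
proof -
  define m where "m = cmod B"
  have m2: "m^2 = (Re B)^2 + (Im B)^2" unfolding m_def by (simp add: cmod_power2)
  have L1: "Re (L 1) = c*(A + Re B)" "Im (L 1) = c * Im B" using L[of 1] by simp_all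
  have Li0: "L \<i> = complex_of_real c * (complex_of_real A * \<i> - B * \<i>)" using L[of \<i>] by simp
  have Li: "Re (L \<i>) = c * Im B" "Im (L \<i>) = c*(A - Re B)" unfolding Li0 by (simp_all add: algebra_simps)
  have tr: "Re (L 1) + Im (L \<i>) = 2*c*A" using L1 Li by (simp add: algebra_simps)
  have dt: "Re (L 1) * Im (L \<i>) - Re (L \<i>) * Im (L 1) = c^2 * (A^2 - m^2)"
    unfolding L1 Li m2 by (simp add: algebra_simps power2_eq_square)
  have key: "ev^2 - complex_of_real (2*c*A) * ev + complex_of_real (c^2 * (A^2 - m^2))
      = (ev - complex_of_real (c*(A+m))) * (ev - complex_of_real (c*(A-m)))" for ev
    by (simp add: algebra_simps power2_eq_square)
  show ?thesis
    unfolding real_lin_eigenvalues_def Let_def tr dt key m_def[symmetric]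
    by auto
qed

lemma eig_props:
  fixes A c m :: real
  assumes "c < 0" "A > 0" "m \<ge> 0" and E: "real_lin_eigenvalues L = {complex_of_real (c*(A + m)), complex_of_real (c*(A - m))}"
  shows "(is_sink L \<longleftrightarrow> A > m) \<and> (is_saddle L \<longleftrightarrow> A < m) \<and> \<not> is_source L"
proof -
  have n1: "c*(A+m) < 0" using assms by (simp add: mult_neg_pos)
  have s2: "c*(A-m) < 0 \<longleftrightarrow> A > m" using assms by (simp add: mult_less_0_iff)
  have s3: "c*(A-m) > 0 \<longleftrightarrow> A < m" using assms by (simp add: zero_less_mult_iff)
  show ?thesis
    unfolding is_sink_def is_saddle_def is_source_def E using n1 s2 s3 by auto
qed
lemma herm_self: "herm v v = complex_of_real ((norm v)^2)"
proof -
  have "(norm v)^2 = (\<Sum>i\<in>UNIV. (cmod (v$i))^2)"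
    unfolding norm_vec_def L2_set_def by (simp add: sum_nonneg)
  moreover have "herm v v = (\<Sum>i\<in>UNIV. complex_of_real ((cmod (v$i))^2))"
    unfolding herm_def by (simp only: complex_norm_square)
  ultimately show ?thesis by (simp only: of_real_sum)
qed

lemma herm_cnj: "herm p v = cnj (herm v p)"
  unfolding herm_def by (simp add: mult.commute)

theorem mainTheorem13:
  fixes d :: nat and V :: "complex^3 \<Rightarrow> complex^3" and p :: "complex^3"
  assumes hom: "homogeneous_poly_field d V"
    and divfree: "\<forall>q. divergence V q = 0"
    and nonvan: "\<forall>q. q \<noteq> 0 \<longrightarrow> V q \<noteq> 0"
    and p_nz: "p \<noteq> 0"
    and zero: "herm p (V p) = 0"
  shows "(is_sink (leaf_linearization d V p) \<longleftrightarrow>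
            (norm (V p))^2 > cmod (herm (DVV V p) p))
       \<and> (is_saddle (leaf_linearization d V p) \<longleftrightarrow>
            (norm (V p))^2 < cmod (herm (DVV V p) p))
       \<and> \<not> is_source (leaf_linearization d V p)"
proof -
  have "\<forall>k. \<exists>a. ((\<lambda>q. V q $ k) has_derivative (\<lambda>h. \<Sum>l\<in>UNIV. a l * h$l)) (at p)"
    using cpd_V[OF hom] unfolding cpd_def by blast
  then obtain a :: "3 \<Rightarrow> 3 \<Rightarrow> complex" where
    dV: "\<And>k. ((\<lambda>q. V q $ k) has_derivative (\<lambda>h. \<Sum>l\<in>UNIV. a k l * h$l)) (at p)"
    by metis
  have pd: "pderiv_field V k l p = a k l" for k l
  proof -
    have lin: "((\<lambda>t::complex. p + t *s axis l 1) has_derivative (\<lambda>t. t *s axis l 1)) (at 0)"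
      by (rule has_derivative_vecI) (auto intro!: derivative_eq_intros)
    have "((\<lambda>q. V q $ k) has_derivative (\<lambda>h. \<Sum>m\<in>UNIV. a k m * h$m)) (at ((\<lambda>t::complex. p + t *s axis l 1) 0))"
      using dV by simp
    from diff_chain_at[OF lin this]
    have "((\<lambda>t. V (p + t *s axis l 1) $ k) has_derivative (\<lambda>t. \<Sum>m\<in>UNIV. a k m * (t *s axis l 1)$m)) (at 0)"
      by (simp add: o_def)
    moreover have "(\<lambda>t. \<Sum>m\<in>UNIV. a k m * (t *s axis l 1)$m) = (\<lambda>t. a k l * t)"
    proof
      fix t
      have "(\<Sum>m\<in>UNIV. a k m * (t *s axis l 1)$m) = (\<Sum>m\<in>UNIV. if m = l then a k l * t else 0)"
        by (rule sum.cong) (auto simp: axis_def)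
      then show "(\<Sum>m\<in>UNIV. a k m * (t *s axis l 1)$m) = a k l * t" by simp
    qed
    ultimately have "((\<lambda>t. V (p + t *s axis l 1) $ k) has_field_derivative a k l) (at 0)"
      unfolding has_field_derivative_def by simp
    then show ?thesis unfolding pderiv_field_def by (rule DERIV_imp_deriv)
  qed
  define Dnum where "Dnum h = (\<Sum>k\<in>UNIV. h$k * cnj (V p $ k) + p$k * cnj (\<Sum>l\<in>UNIV. a k l * h$l))" for h
  have dnum: "((\<lambda>q. herm q (V q)) has_derivative Dnum) (at p)"
    unfolding herm_def Dnum_def
    apply (rule has_derivative_sum)
    apply (rule has_derivative_eq_rhs)
     apply (rule has_derivative_mult[OF bounded_linear.has_derivative[OF bounded_linear_vec_nth has_derivative_ident] has_derivative_cnj[OF dV]])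
    apply (simp add: algebra_simps)
    done
  obtain Dd where dden: "((\<lambda>q. complex_of_real (norm q ^ (2*d))) has_derivative Dd) (at p)"
    using has_derivative_of_real[OF has_derivative_power[OF has_derivative_norm[OF p_nz]]] by blast
  define N where "N = norm p ^ (2*d)"
  have Npos: "N > 0" unfolding N_def using p_nz by simp
  define Drho where "Drho h = (-2 * Dnum h) / complex_of_real N" for h
  have drho: "(rho_tilde d V has_derivative Drho) (at p)"
  proof -
    have "((\<lambda>q. -2 * herm q (V q)) has_derivative (\<lambda>h. -2 * Dnum h)) (at p)"
      by (rule has_derivative_mult_right[OF dnum])
    from has_derivative_divide[OF this dden] Npos
    show ?thesis unfolding rho_tilde_def[abs_def] Drho_def N_def using zero p_nz by simp
  qed
  have rho0: "rho_tilde d V p = 0" unfolding rho_tilde_def using zero by simp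
  define D where "D h = (\<chi> k. Drho h * V p $ k)" for h
  have dW: "(W_lift d V has_derivative D) (at p)"
  proof (rule has_derivative_vecI)
    fix k
    have "((\<lambda>q. rho_tilde d V q * V q $ k) has_derivative
        (\<lambda>h. rho_tilde d V p * (\<Sum>l\<in>UNIV. a k l * h$l) + Drho h * V p $ k)) (at p)"
      by (rule has_derivative_mult[OF drho dV])
    then show "((\<lambda>x. W_lift d V x $ k) has_derivative (\<lambda>h. D h $ k)) (at p)"
      unfolding W_lift_def D_def rho0 by simp
  qed
  have fd: "frechet_derivative (W_lift d V) (at p) = D"
    using frechet_derivative_at[OF dW] by simp
  define A where "A = (norm (V p))^2"
  define B where "B = herm p (DVV V p)"
  have Apos: "A > 0" unfolding A_def using nonvan p_nz by simp
  have Dnum_s: "Dnum (s *s V p) = s * complex_of_real A + cnj s * B" for s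
  proof -
    have inner: "(\<Sum>l\<in>UNIV. a k l * (s *s V p)$l) = s * DVV V p $ k" for k
      unfolding DVV_def pd by (simp add: sum_distrib_left algebra_simps)
    have "Dnum (s *s V p) = (\<Sum>k\<in>UNIV. s * (V p $ k * cnj (V p $ k))) + (\<Sum>k\<in>UNIV. cnj s * (p$k * cnj (DVV V p $ k)))"
      unfolding Dnum_def inner by (simp add: sum.distrib algebra_simps)
    also have "\<dots> = s * herm (V p) (V p) + cnj s * B"
      unfolding B_def herm_def by (simp add: sum_distrib_left)
    finally show ?thesis unfolding herm_self A_def .
  qed
  have Lform: "leaf_linearization d V p s = complex_of_real (-2 / N) * (complex_of_real A * s + B * cnj s)" for s
  proof -
    have "herm (D (s *s V p)) (V p) = Drho (s *s V p) * herm (V p) (V p)"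
      unfolding D_def herm_def by (simp add: sum_distrib_left algebra_simps)
    then have "leaf_linearization d V p s = Drho (s *s V p)"
      unfolding leaf_linearization_def fd herm_self A_def using Apos unfolding A_def by simp
    also have "\<dots> = complex_of_real (-2 / N) * (complex_of_real A * s + B * cnj s)"
      unfolding Drho_def Dnum_s using Npos by (simp add: field_simps)
    finally show ?thesis .
  qed
  have cB: "cmod B = cmod (herm (DVV V p) p)" unfolding B_def herm_cnj[of p] by simp
  have cneg: "-2 / N < 0" using Npos by simp
  from eig_props[OF cneg Apos norm_ge_zero eig[OF Lform]]
  show ?thesis unfolding cB A_def by simp
qed

end
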